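(* Neither the sequential fan $S_\omega$ nor Arens' space $S_2$ is self-selective.
   Context: For spaces $Y$, $X$, a map $\varphi:Y\to\mathcal P(X)\setminus\{\emptyset\}$ is lower semicontinuous (l.s.c.) if $\{y:\varphi(y)\cap U\neq\emptyset\}$ is open in $Y$ for every open $U\subseteq X$; a selection is a map $f:Y\to X$ with $f(y)\in\varphi(y)$ for all $y$. A space $X$ is self-selective if every l.s.c. map from $X$ to the nonempty closed subsets of $X$ has a continuous selection. The sequential fan $S_\omega$ is the quotient of the topological sum of countably many convergent sequences (with limits) obtained by identifying all limit points. Arens' space $S_2=\{x\}\cup\{x_n:n\in\omega\}\cup\{x_{n,m}:n,m\in\omega\}$: each $x_{n,m}$ is isolated; a neighborhood base at $x_n$ consists of the sets $\{x_n\}\cup\{x_{n,m}:m\in\omega\setminus K\}$, $K$ finite; a neighborhood base at $x$ consists of the sets $\{x\}\cup\{x_n:n\in\omega\setminus K\}\cup\{x_{n,m}:n\in\omega\setminus K,\ m>f(n)\}$ with $K$ finite and $f:\omega\to\omega$. *)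

theory Defs
  imports "HOL-Analysis.Analysis"
begin

definition lsc_map :: "'a topology \<Rightarrow> 'b topology \<Rightarrow> ('a \<Rightarrow> 'b set) \<Rightarrow> bool" where
  "lsc_map Y X \<phi> \<longleftrightarrow>
     (\<forall>y\<in>topspace Y. \<phi> y \<subseteq> topspace X \<and> \<phi> y \<noteq> {}) \<and>
     (\<forall>U. openin X U \<longrightarrow> openin Y {y \<in> topspace Y. \<phi> y \<inter> U \<noteq> {}})"

definition self_selective :: "'a topology \<Rightarrow> bool" where
  "self_selective X \<longleftrightarrow>
     (\<forall>\<phi>. lsc_map X X \<phi> \<and> (\<forall>x\<in>topspace X. closedin X (\<phi> x)) \<longrightarrow>
        (\<exists>f. continuous_map X X f \<and> (\<forall>x\<in>topspace X. f x \<in> \<phi> x)))"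

definition conv_seq :: "real topology" where
  "conv_seq = subtopology euclideanreal (insert 0 {1 / real (Suc m) | m. True})"

definition fan_quot :: "nat \<times> real \<Rightarrow> (nat \<times> real) option" where
  "fan_quot p = (if snd p = 0 then None else Some p)"

definition seq_fan :: "(nat \<times> real) option topology" where
  "seq_fan = topology (\<lambda>U. U \<subseteq> fan_quot ` topspace (sum_topology (\<lambda>n. conv_seq) UNIV) \<and>
      openin (sum_topology (\<lambda>n. conv_seq) UNIV)
        {p \<in> topspace (sum_topology (\<lambda>n. conv_seq) UNIV). fan_quot p \<in> U})"

text \<open>Arens' space: \<open>Apex = x\<close>, \<open>Mid n = x_n\<close>, \<open>Leaf n m = x_{n,m}\<close>.\<close>
datatype arens_pt = Apex | Mid nat | Leaf nat nat

definition arens_nbhd_base :: "arens_pt \<Rightarrow> arens_pt set set" where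
  "arens_nbhd_base p = (case p of
      Leaf n m \<Rightarrow> {{Leaf n m}}
    | Mid n \<Rightarrow> {insert (Mid n) {Leaf n m | m. m \<notin> K} | K. finite K}
    | Apex \<Rightarrow> {insert Apex ({Mid n | n. n \<notin> K} \<union> {Leaf n m | n m. n \<notin> K \<and> m > f n})
                | K f. finite K})"

definition arens_space :: "arens_pt topology" where
  "arens_space = topology (\<lambda>U. \<forall>p\<in>U. \<exists>B\<in>arens_nbhd_base p. B \<subseteq> U)"

end

theory Submission
  imports Defs "HOL-Library.Nat_Bijection"
begin


lemma arens_int: "\<exists>B\<in>arens_nbhd_base p. B \<subseteq> B1 \<inter> B2" if h1: "B1 \<in> arens_nbhd_base p" and h2: "B2 \<in> arens_nbhd_base p" for p B1 B2
  proof (cases p)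
    case Apex
    obtain K1 f1 where k1: "finite K1"
      and b1: "B1 = insert Apex ({Mid n | n. n \<notin> K1} \<union> {Leaf n m | n m. n \<notin> K1 \<and> m > f1 n})"
      using h1 unfolding Apex arens_nbhd_base_def arens_pt.case mem_Collect_eq by blast
    obtain K2 f2 where k2: "finite K2"
      and b2: "B2 = insert Apex ({Mid n | n. n \<notin> K2} \<union> {Leaf n m | n m. n \<notin> K2 \<and> m > f2 n})"
      using h2 unfolding Apex arens_nbhd_base_def arens_pt.case mem_Collect_eq by blast
    let ?B = "insert Apex ({Mid n | n. n \<notin> K1 \<union> K2} \<union> {Leaf n m | n m. n \<notin> K1 \<union> K2 \<and> m > max (f1 n) (f2 n)})"
    have "?B \<in> arens_nbhd_base p"
      unfolding Apex arens_nbhd_base_def arens_pt.case(1) mem_Collect_eq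
      by (rule exI[of _ "K1 \<union> K2"], rule exI[of _ "\<lambda>n. max (f1 n) (f2 n)"]) (simp add: k1 k2)
    moreover have "?B \<subseteq> B1 \<inter> B2" unfolding b1 b2 by auto
    ultimately show ?thesis by (rule bexI[rotated])
  next
    case (Mid n)
    obtain K1 where k1: "finite K1" and b1: "B1 = insert (Mid n) {Leaf n m | m. m \<notin> K1}"
      using h1 unfolding Mid arens_nbhd_base_def arens_pt.case mem_Collect_eq by blast
    obtain K2 where k2: "finite K2" and b2: "B2 = insert (Mid n) {Leaf n m | m. m \<notin> K2}"
      using h2 unfolding Mid arens_nbhd_base_def arens_pt.case mem_Collect_eq by blast
    let ?B = "insert (Mid n) {Leaf n m | m. m \<notin> K1 \<union> K2}"
    have "?B \<in> arens_nbhd_base p"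
      unfolding Mid arens_nbhd_base_def arens_pt.case(2) mem_Collect_eq
      by (rule exI[of _ "K1 \<union> K2"]) (simp add: k1 k2)
    moreover have "?B \<subseteq> B1 \<inter> B2" unfolding b1 b2 by auto
    ultimately show ?thesis by (rule bexI[rotated])
  next
    case (Leaf n m)
    then have "B1 = {Leaf n m}" "B2 = {Leaf n m}" using h1 h2 by (simp_all add: arens_nbhd_base_def)
    then show ?thesis using h1 by blast
  qed

lemma arens_istop: "istopology (\<lambda>U. \<forall>p\<in>U. \<exists>B\<in>arens_nbhd_base p. B \<subseteq> U)"
proof -
  note int = arens_int
  show ?thesis
  unfolding istopology_def
  proof (intro conjI allI impI)
    fix S T assume S: "\<forall>p\<in>S. \<exists>B\<in>arens_nbhd_base p. B \<subseteq> S" and T: "\<forall>p\<in>T. \<exists>B\<in>arens_nbhd_base p. B \<subseteq> T"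
    show "\<forall>p\<in>S \<inter> T. \<exists>B\<in>arens_nbhd_base p. B \<subseteq> S \<inter> T"
    proof
      fix p assume p: "p \<in> S \<inter> T"
      have "\<exists>B\<in>arens_nbhd_base p. B \<subseteq> S" using S p by simp
      then obtain B1 where B1: "B1 \<in> arens_nbhd_base p" "B1 \<subseteq> S" by (rule bexE)
      have "\<exists>B\<in>arens_nbhd_base p. B \<subseteq> T" using T p by simp
      then obtain B2 where B2: "B2 \<in> arens_nbhd_base p" "B2 \<subseteq> T" by (rule bexE)
      obtain B where "B \<in> arens_nbhd_base p" "B \<subseteq> B1 \<inter> B2" using int[OF B1(1) B2(1)] by (rule bexE)
      then show "\<exists>B\<in>arens_nbhd_base p. B \<subseteq> S \<inter> T" using B1(2) B2(2) by blast
    qed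
  next
    fix K assume K: "\<forall>S\<in>K. \<forall>p\<in>S. \<exists>B\<in>arens_nbhd_base p. B \<subseteq> S"
    show "\<forall>p\<in>\<Union> K. \<exists>B\<in>arens_nbhd_base p. B \<subseteq> \<Union> K"
    proof
      fix p assume "p \<in> \<Union>K"
      then obtain S where S: "S \<in> K" "p \<in> S" by (rule UnionE)
      have "\<exists>B\<in>arens_nbhd_base p. B \<subseteq> S" using K S by simp
      then obtain B where "B \<in> arens_nbhd_base p" "B \<subseteq> S" by (rule bexE)
      then show "\<exists>B\<in>arens_nbhd_base p. B \<subseteq> \<Union> K" using S(1) by blast
    qed
  qed
qed

lemma openin_arens: "openin arens_space U \<longleftrightarrow>
   (\<forall>n. Mid n \<in> U \<longrightarrow> (\<exists>M. \<forall>m\<ge>M. Leaf n m \<in> U)) \<and>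
   (Apex \<in> U \<longrightarrow> (\<exists>N g. \<forall>n\<ge>N. Mid n \<in> U \<and> (\<forall>m>g n. Leaf n m \<in> U)))"
proof -
  have o: "openin arens_space U \<longleftrightarrow> (\<forall>p\<in>U. \<exists>B\<in>arens_nbhd_base p. B \<subseteq> U)"
    unfolding arens_space_def using arens_istop by simp
  show ?thesis
  proof
    assume "openin arens_space U"
    then have H: "\<forall>p\<in>U. \<exists>B\<in>arens_nbhd_base p. B \<subseteq> U" using o by simp
    show "(\<forall>n. Mid n \<in> U \<longrightarrow> (\<exists>M. \<forall>m\<ge>M. Leaf n m \<in> U)) \<and>
      (Apex \<in> U \<longrightarrow> (\<exists>N g. \<forall>n\<ge>N. Mid n \<in> U \<and> (\<forall>m>g n. Leaf n m \<in> U)))"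
    proof (intro conjI allI impI)
      fix n assume "Mid n \<in> U"
      then obtain B where B: "B \<in> arens_nbhd_base (Mid n)" "B \<subseteq> U" using H by blast
      then obtain K where K: "finite K" "insert (Mid n) {Leaf n m | m. m \<notin> K} \<subseteq> U"
        unfolding arens_nbhd_base_def arens_pt.case mem_Collect_eq by blast
      obtain M where "\<forall>m\<in>K. m < M" using K(1) finite_nat_bounded by blast
      then have "\<forall>m\<ge>M. Leaf n m \<in> U"
      proof (intro allI impI)
        fix m assume "\<forall>m\<in>K. m < M" "m \<ge> M"
        then have "m \<notin> K" by auto
        then show "Leaf n m \<in> U" using K(2) by blast
      qed
      then show "\<exists>M. \<forall>m\<ge>M. Leaf n m \<in> U" by blast
    next
      assume "Apex \<in> U"
      then obtain B where B: "B \<in> arens_nbhd_base Apex" "B \<subseteq> U" using H by blast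
      then obtain K f where K: "finite K"
        "insert Apex ({Mid n | n. n \<notin> K} \<union> {Leaf n m | n m. n \<notin> K \<and> m > f n}) \<subseteq> U"
        unfolding arens_nbhd_base_def arens_pt.case mem_Collect_eq by blast
      obtain N where "\<forall>m\<in>K. m < N" using K(1) finite_nat_bounded by blast
      then have "\<forall>n\<ge>N. Mid n \<in> U \<and> (\<forall>m>f n. Leaf n m \<in> U)"
      proof (intro allI impI conjI)
        fix n m assume "\<forall>m\<in>K. m < N" "n \<ge> N"
        then have nK: "n \<notin> K" by auto
        then show "Mid n \<in> U" using K(2) by blast
        assume "m > f n"
        then show "Leaf n m \<in> U" using K(2) nK by blast
      qed
      then show "\<exists>N g. \<forall>n\<ge>N. Mid n \<in> U \<and> (\<forall>m>g n. Leaf n m \<in> U)" by blast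
    qed
  next
    assume A: "(\<forall>n. Mid n \<in> U \<longrightarrow> (\<exists>M. \<forall>m\<ge>M. Leaf n m \<in> U)) \<and>
      (Apex \<in> U \<longrightarrow> (\<exists>N g. \<forall>n\<ge>N. Mid n \<in> U \<and> (\<forall>m>g n. Leaf n m \<in> U)))"
    have "\<exists>B\<in>arens_nbhd_base p. B \<subseteq> U" if pU: "p \<in> U" for p
    proof (cases p)
      case Apex
      then obtain N g where Ng: "\<forall>n\<ge>N. Mid n \<in> U \<and> (\<forall>m>g n. Leaf n m \<in> U)" using A pU by auto
      let ?B = "insert Apex ({Mid n | n. n \<notin> {..<N}} \<union> {Leaf n m | n m. n \<notin> {..<N} \<and> m > g n})"
      have "?B \<in> arens_nbhd_base p" unfolding arens_nbhd_base_def Apex arens_pt.case(1) mem_Collect_eq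
        by (rule exI[of _ "{..<N}"], rule exI[of _ g]) simp
      moreover have "?B \<subseteq> U" using Ng pU Apex by auto
      ultimately show ?thesis by blast
    next
      case (Mid n)
      then obtain M where M: "\<forall>m\<ge>M. Leaf n m \<in> U" using A pU by auto
      let ?B = "insert (Mid n) {Leaf n m | m. m \<notin> {..<M}}"
      have "?B \<in> arens_nbhd_base p" unfolding arens_nbhd_base_def Mid arens_pt.case(2) mem_Collect_eq
        by (rule exI[of _ "{..<M}"]) simp
      moreover have "?B \<subseteq> U" using M pU Mid by auto
      ultimately show ?thesis by blast
    next
      case (Leaf n m)
      then show ?thesis using pU by (auto simp: arens_nbhd_base_def)
    qed
    then show "openin arens_space U" using o by blast
  qed
qed

lemma topspace_arens: "topspace arens_space = UNIV"
proof -
  have "openin arens_space UNIV" by (simp add: openin_arens)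
  then show ?thesis by (meson openin_subset subset_UNIV subset_antisym)
qed
  


definition arens_phi :: "arens_pt \<Rightarrow> arens_pt set" where
  "arens_phi p = (case p of Leaf n m \<Rightarrow> {Leaf k m | k. True} | _ \<Rightarrow> {Apex})"

lemma arens_lsc: "lsc_map arens_space arens_space arens_phi"
  unfolding lsc_map_def topspace_arens
proof (intro conjI ballI allI impI)
  fix y show "arens_phi y \<subseteq> UNIV" by simp
  show "arens_phi y \<noteq> {}" by (cases y) (auto simp: arens_phi_def)
next
  fix U assume U: "openin arens_space U"
  show "openin arens_space {y \<in> UNIV. arens_phi y \<inter> U \<noteq> {}}"
  proof (cases "Apex \<in> U")
    case True
    then obtain N g where Ng: "\<forall>n\<ge>N. Mid n \<in> U \<and> (\<forall>m>g n. Leaf n m \<in> U)"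
      using U unfolding openin_arens by blast
    have row: "arens_phi (Leaf n m) \<inter> U \<noteq> {}" if "m > g N" for n m
    proof -
      have "Leaf N m \<in> U" using Ng that by simp
      moreover have "Leaf N m \<in> arens_phi (Leaf n m)" by (simp add: arens_phi_def)
      ultimately show ?thesis by blast
    qed
    have ap: "arens_phi Apex \<inter> U \<noteq> {}" "arens_phi (Mid n) \<inter> U \<noteq> {}" for n
      using True by (simp_all add: arens_phi_def)
    show ?thesis unfolding openin_arens
    proof (intro conjI allI impI)
      fix n show "\<exists>M. \<forall>m\<ge>M. Leaf n m \<in> {y \<in> UNIV. arens_phi y \<inter> U \<noteq> {}}"
        using row by (intro exI[of _ "Suc (g N)"]) simp
    next
      show "\<exists>N' g'. \<forall>n\<ge>N'. Mid n \<in> {y \<in> UNIV. arens_phi y \<inter> U \<noteq> {}} \<and>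
          (\<forall>m>g' n. Leaf n m \<in> {y \<in> UNIV. arens_phi y \<inter> U \<noteq> {}})"
        using row ap by (intro exI[of _ 0] exI[of _ "\<lambda>_. g N"]) simp
    qed
  next
    case False
    have "arens_phi Apex \<inter> U = {}" "arens_phi (Mid n) \<inter> U = {}" for n
      using False by (simp_all add: arens_phi_def)
    then show ?thesis unfolding openin_arens by simp
  qed
qed

lemma arens_closed: "closedin arens_space (arens_phi p)"
proof -
  have "openin arens_space (UNIV - arens_phi p)"
  proof (cases p)
    case (Leaf n0 m0)
    have ph: "arens_phi p = {Leaf k m0 | k. True}" by (simp add: Leaf arens_phi_def)
    show ?thesis unfolding openin_arens ph
    proof (intro conjI allI impI)
      fix n show "\<exists>M. \<forall>m\<ge>M. Leaf n m \<in> UNIV - {Leaf k m0 |k. True}"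
        by (intro exI[of _ "Suc m0"]) auto
    next
      show "\<exists>N g. \<forall>n\<ge>N. Mid n \<in> UNIV - {Leaf k m0 |k. True} \<and> (\<forall>m>g n. Leaf n m \<in> UNIV - {Leaf k m0 |k. True})"
        by (intro exI[of _ 0] exI[of _ "\<lambda>_. m0"]) auto
    qed
  qed (simp_all add: arens_phi_def openin_arens)
  then show ?thesis unfolding closedin_def topspace_arens by simp
qed

lemma arens_not_ss: "\<not> self_selective arens_space"
proof
  assume "self_selective arens_space"
  then obtain f where f: "continuous_map arens_space arens_space f" and sel: "\<And>x. f x \<in> arens_phi x"
    unfolding self_selective_def using arens_lsc arens_closed topspace_arens by blast
  have fA: "f (Mid 0) = Apex" using sel[of "Mid 0"] by (simp add: arens_phi_def)
  have conv: "\<exists>M. \<forall>m\<ge>M. f (Leaf 0 m) \<in> V" if V: "openin arens_space V" "Apex \<in> V" for V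
  proof -
    have "openin arens_space {x \<in> topspace arens_space. f x \<in> V}"
      using f V(1) by (simp add: continuous_map_def)
    moreover have "Mid 0 \<in> {x \<in> topspace arens_space. f x \<in> V}" using fA V(2) topspace_arens by simp
    ultimately show ?thesis unfolding openin_arens by (simp add: topspace_arens)
  qed
  have "\<exists>k. f (Leaf 0 m) = Leaf k m" for m using sel[of "Leaf 0 m"] by (simp add: arens_phi_def)
  then obtain k where k: "\<And>m. f (Leaf 0 m) = Leaf (k m) m" by metis
  have "\<exists>M. \<forall>m\<ge>M. k m \<noteq> c" for c
  proof -
    let ?V = "UNIV - insert (Mid c) {Leaf c j | j. True}"
    have "openin arens_space ?V" unfolding openin_arens
    proof (intro conjI allI impI)
      fix n assume "Mid n \<in> ?V"
      then have "n \<noteq> c" by auto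
      then show "\<exists>M. \<forall>m\<ge>M. Leaf n m \<in> ?V" by auto
    next
      show "\<exists>N g. \<forall>n\<ge>N. Mid n \<in> ?V \<and> (\<forall>m>g n. Leaf n m \<in> ?V)"
        by (intro exI[of _ "Suc c"] exI[of _ "\<lambda>_. 0"]) auto
    qed
    then obtain M where "\<forall>m\<ge>M. f (Leaf 0 m) \<in> ?V" using conv by blast
    then show ?thesis using k by auto
  qed
  then obtain Mc where Mc: "\<And>c m. m \<ge> Mc c \<Longrightarrow> k m \<noteq> c" by metis
  let ?V = "{p. case p of Leaf n j \<Rightarrow> j > Mc n | _ \<Rightarrow> True}"
  have Vo: "openin arens_space ?V" unfolding openin_arens
  proof (intro conjI allI impI)
    fix n show "\<exists>M. \<forall>m\<ge>M. Leaf n m \<in> ?V" by (intro exI[of _ "Suc (Mc n)"]) auto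
  next
    show "\<exists>N g. \<forall>n\<ge>N. Mid n \<in> ?V \<and> (\<forall>m>g n. Leaf n m \<in> ?V)"
      by (intro exI[of _ 0] exI[of _ Mc]) auto
  qed
  have "Apex \<in> ?V" by simp
  then obtain M where M: "\<forall>m\<ge>M. f (Leaf 0 m) \<in> ?V" using conv[OF Vo] by blast
  then have "M > Mc (k M)" using k[of M] by auto
  then show False using Mc[of "k M" M] by simp
qed



lemma sep_aux:
  fixes a b :: nat
  assumes "a \<ge> 1" "b \<ge> 1" "a \<noteq> b"
  shows "\<bar>1 / real b - 1 / real a\<bar> \<ge> 1 / (real a * (real a + 1))"
proof (cases "b > a")
  case True
  then have "real b \<ge> real a + 1" by simp
  then have "1 / real b \<le> 1 / (real a + 1)" using assms by (simp add: frac_le)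
  moreover have "1 / real a - 1 / (real a + 1) = 1 / (real a * (real a + 1))" using assms by (simp add: field_simps)
  moreover have "1 / real b \<le> 1 / real a" using True assms by (simp add: frac_le)
  ultimately show ?thesis by linarith
next
  case False
  then have "b < a" using assms by simp
  then have "real b \<le> real a - 1" by simp
  have "1 / real b - 1 / real a = (real a - real b) / (real a * real b)" using assms by (simp add: field_simps)
  also have "\<dots> \<ge> 1 / (real a * real b)" using \<open>b < a\<close> assms by (simp add: divide_right_mono)
  finally have 1: "1 / real b - 1 / real a \<ge> 1 / (real a * real b)" .
  have "real a * real b \<le> real a * (real a + 1)" using \<open>b < a\<close> by (simp add: mult_left_mono)
  then have "1 / (real a * real b) \<ge> 1 / (real a * (real a + 1))" using assms by (simp add: frac_le)
  with 1 show ?thesis by linarith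
qed

definition cs :: "real set" where "cs = insert 0 {1 / real (Suc m) | m. True}"

lemma open_conv_seq:
  "openin conv_seq W \<longleftrightarrow> W \<subseteq> cs \<and> (0 \<in> W \<longrightarrow> (\<exists>M. \<forall>m\<ge>M. 1 / real (Suc m) \<in> W))"
proof -
  have c: "conv_seq = top_of_set cs" unfolding conv_seq_def cs_def by simp
  show ?thesis unfolding c openin_euclidean_subtopology_iff
  proof (intro iffI conjI impI)
    assume H: "W \<subseteq> cs \<and> (\<forall>x\<in>W. \<exists>e>0. \<forall>x'\<in>cs. dist x' x < e \<longrightarrow> x' \<in> W)"
    then show "W \<subseteq> cs" by simp
    assume "0 \<in> W"
    then obtain e where e: "e > 0" "\<forall>x'\<in>cs. dist x' 0 < e \<longrightarrow> x' \<in> W" using H by blast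
    obtain M where M: "inverse (real (Suc M)) < e" using reals_Archimedean[OF e(1)] by blast
    have "1 / real (Suc m) \<in> W" if "m \<ge> M" for m
    proof -
      have le: "1 / real (Suc m) \<le> 1 / real (Suc M)" using that by (simp add: frac_le)
      have "1 / real (Suc M) < e" using M by (simp add: inverse_eq_divide)
      then have "1 / real (Suc m) < e" using le by linarith
      then have "dist (1 / real (Suc m)) 0 < e" by simp
      moreover have "1 / real (Suc m) \<in> cs" unfolding cs_def by blast
      ultimately show ?thesis using e(2) by blast
    qed
    then show "\<exists>M. \<forall>m\<ge>M. 1 / real (Suc m) \<in> W" by blast
  next
    assume H: "W \<subseteq> cs \<and> (0 \<in> W \<longrightarrow> (\<exists>M. \<forall>m\<ge>M. 1 / real (Suc m) \<in> W))"
    then show "W \<subseteq> cs" by simp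
    show "\<forall>x\<in>W. \<exists>e>0. \<forall>x'\<in>cs. dist x' x < e \<longrightarrow> x' \<in> W"
    proof
      fix x assume xW: "x \<in> W"
      then have "x \<in> cs" using H by blast
      then consider "x = 0" | m where "x = 1 / real (Suc m)" unfolding cs_def by blast
      then show "\<exists>e>0. \<forall>x'\<in>cs. dist x' x < e \<longrightarrow> x' \<in> W"
      proof cases
        case 1
        then obtain M where M: "\<forall>m\<ge>M. 1 / real (Suc m) \<in> W" using H xW by blast
        have "\<forall>x'\<in>cs. dist x' x < 1 / real (Suc M) \<longrightarrow> x' \<in> W"
        proof (intro ballI impI)
          fix x' assume x': "x' \<in> cs" "dist x' x < 1 / real (Suc M)"
          then consider "x' = 0" | k where "x' = 1 / real (Suc k)"
            unfolding cs_def by blast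
          then show "x' \<in> W"
          proof cases
            case 1 then show ?thesis using xW \<open>x = 0\<close> by simp
          next
            case (2 k)
            then have lt: "1 / real (Suc k) < 1 / real (Suc M)" using x'(2) \<open>x = 0\<close> by (simp add: dist_real_def)
            have "\<not> k < M"
            proof
              assume "k < M"
              then have "1 / real (Suc M) \<le> 1 / real (Suc k)" by (simp add: frac_le)
              with lt show False by linarith
            qed
            then have "k \<ge> M" by simp
            then show ?thesis using M 2 by simp
          qed
        qed
        then show ?thesis by (intro exI[of _ "1 / real (Suc M)"]) simp
      next
        case (2 m)
        let ?e = "1 / (real (Suc m) * (real (Suc m) + 1))"
        have "\<forall>x'\<in>cs. dist x' x < ?e \<longrightarrow> x' \<in> W"
        proof (intro ballI impI)
          fix x' assume x': "x' \<in> cs" "dist x' x < ?e"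
          then consider "x' = 0" | k where "x' = 1 / real (Suc k)"
            unfolding cs_def by blast
          then show "x' \<in> W"
          proof cases
            case 1
            have "?e \<le> 1 / real (Suc m)" by (simp add: frac_le)
            then show ?thesis using x'(2) 1 2 by (simp add: dist_real_def)
          next
            case (2 k)
            show ?thesis
            proof (cases "k = m")
              case True then show ?thesis using xW \<open>x = 1 / real (Suc m)\<close> 2 by simp
            next
              case False
              then have "\<bar>1 / real (Suc k) - 1 / real (Suc m)\<bar> \<ge> ?e"
                using sep_aux[of "Suc m" "Suc k"] by simp
              then show ?thesis using x'(2) 2 \<open>x = 1 / real (Suc m)\<close> by (simp add: dist_real_def)
            qed
          qed
        qed
        then show ?thesis by (intro exI[of _ ?e]) simp
      qed
    qed
  qed
qed



definition leaf :: "nat \<Rightarrow> nat \<Rightarrow> (nat \<times> real) option" where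
  "leaf n m = Some (n, 1 / real (Suc m))"

definition FS :: "(nat \<times> real) option set" where
  "FS = insert None {leaf n m | n m. True}"

lemma leaf_inj [simp]: "leaf n m = leaf n' m' \<longleftrightarrow> n = n' \<and> m = m'"
  by (auto simp: leaf_def)

lemma leaf_None [simp]: "leaf n m \<noteq> None" "None \<noteq> leaf n m"
  by (auto simp: leaf_def)

lemma topspace_cs: "topspace conv_seq = cs"
  unfolding conv_seq_def cs_def by simp

abbreviation "SUMT \<equiv> sum_topology (\<lambda>n::nat. conv_seq) UNIV"

lemma img_FS: "fan_quot ` topspace SUMT = FS"
proof -
  have "topspace SUMT = Sigma UNIV (\<lambda>_. cs)" by (simp add: topspace_cs o_def)
  moreover have "fan_quot ` Sigma UNIV (\<lambda>_. cs) = FS"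
  proof
    show "fan_quot ` Sigma UNIV (\<lambda>_. cs) \<subseteq> FS"
      unfolding FS_def cs_def fan_quot_def leaf_def by auto
    show "FS \<subseteq> fan_quot ` Sigma UNIV (\<lambda>_. cs)"
    proof
      fix p assume "p \<in> FS"
      then consider "p = None" | n m where "p = leaf n m" unfolding FS_def by blast
      then show "p \<in> fan_quot ` Sigma UNIV (\<lambda>_. cs)"
      proof cases
        case 1
        have "fan_quot (0, 0) = None" by (simp add: fan_quot_def)
        moreover have "(0::nat, 0::real) \<in> Sigma UNIV (\<lambda>_. cs)" by (simp add: cs_def)
        ultimately show ?thesis using 1 by (metis image_eqI)
      next
        case (2 n m)
        have "fan_quot (n, 1 / real (Suc m)) = leaf n m" by (simp add: fan_quot_def leaf_def)
        moreover have "(n, 1 / real (Suc m)) \<in> Sigma UNIV (\<lambda>_. cs)" unfolding cs_def by blast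
        ultimately show ?thesis using 2 by (metis image_eqI)
      qed
    qed
  qed
  ultimately show ?thesis by simp
qed

lemma fan_istop: "istopology (\<lambda>U. U \<subseteq> fan_quot ` topspace SUMT \<and>
      openin SUMT {p \<in> topspace SUMT. fan_quot p \<in> U})"
  unfolding istopology_def
proof (rule conjI; intro allI impI)
  fix S T assume S: "S \<subseteq> fan_quot ` topspace SUMT \<and> openin SUMT {p \<in> topspace SUMT. fan_quot p \<in> S}"
    and T: "T \<subseteq> fan_quot ` topspace SUMT \<and> openin SUMT {p \<in> topspace SUMT. fan_quot p \<in> T}"
  have "{p \<in> topspace SUMT. fan_quot p \<in> S \<inter> T} =
    {p \<in> topspace SUMT. fan_quot p \<in> S} \<inter> {p \<in> topspace SUMT. fan_quot p \<in> T}" by blast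
  moreover have "openin SUMT ({p \<in> topspace SUMT. fan_quot p \<in> S} \<inter> {p \<in> topspace SUMT. fan_quot p \<in> T})"
    using S T by (intro openin_Int) simp_all
  moreover have "S \<inter> T \<subseteq> fan_quot ` topspace SUMT" using S by blast
  ultimately show "S \<inter> T \<subseteq> fan_quot ` topspace SUMT \<and> openin SUMT {p \<in> topspace SUMT. fan_quot p \<in> S \<inter> T}"
    by simp
next
  fix K assume K: "\<forall>S\<in>K. S \<subseteq> fan_quot ` topspace SUMT \<and> openin SUMT {p \<in> topspace SUMT. fan_quot p \<in> S}"
  have "{p \<in> topspace SUMT. fan_quot p \<in> \<Union>K} = (\<Union>S\<in>K. {p \<in> topspace SUMT. fan_quot p \<in> S})" by blast
  moreover have "openin SUMT (\<Union>S\<in>K. {p \<in> topspace SUMT. fan_quot p \<in> S})"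
    using K by (intro openin_Union) blast
  moreover have "\<Union>K \<subseteq> fan_quot ` topspace SUMT" using K by blast
  ultimately show "\<Union>K \<subseteq> fan_quot ` topspace SUMT \<and> openin SUMT {p \<in> topspace SUMT. fan_quot p \<in> \<Union>K}"
    by simp
qed

lemma openin_fan: "openin seq_fan U \<longleftrightarrow>
   U \<subseteq> FS \<and> (None \<in> U \<longrightarrow> (\<forall>n. \<exists>M. \<forall>m\<ge>M. leaf n m \<in> U))"
proof -
  have o: "openin seq_fan U \<longleftrightarrow> U \<subseteq> FS \<and> openin SUMT {p \<in> topspace SUMT. fan_quot p \<in> U}"
    unfolding seq_fan_def using fan_istop img_FS by simp
  have sl: "{x. (n, x) \<in> {p \<in> topspace SUMT. fan_quot p \<in> U}} = {x \<in> cs. fan_quot (n, x) \<in> U}" for n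
    by (auto simp: topspace_cs)
  have z: "fan_quot (n, 0) = None" for n by (simp add: fan_quot_def)
  have l: "fan_quot (n, 1 / real (Suc m)) = leaf n m" for n m by (simp add: fan_quot_def leaf_def)
  have cs0: "0 \<in> cs" and csl: "1 / real (Suc m) \<in> cs" for m unfolding cs_def by blast+
  have "openin SUMT {p \<in> topspace SUMT. fan_quot p \<in> U} \<longleftrightarrow>
     (\<forall>n. openin conv_seq {x \<in> cs. fan_quot (n, x) \<in> U})"
    unfolding openin_sum_topology sl by (auto simp: topspace_cs)
  also have "\<dots> \<longleftrightarrow> (None \<in> U \<longrightarrow> (\<forall>n. \<exists>M. \<forall>m\<ge>M. leaf n m \<in> U))"
    unfolding open_conv_seq using z l cs0 csl by auto
  finally show ?thesis using o by simp
qed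

lemma topspace_fan: "topspace seq_fan = FS"
proof -
  have "openin seq_fan FS" unfolding openin_fan by (auto simp: FS_def)
  then have "FS \<subseteq> topspace seq_fan" by (rule openin_subset)
  moreover have "topspace seq_fan \<subseteq> FS" using openin_fan[of "topspace seq_fan"] by simp
  ultimately show ?thesis by blast
qed



definition ee :: "nat \<Rightarrow> nat" where "ee m = fst (prod_decode m)"

definition AA :: "nat \<Rightarrow> (nat \<times> real) option set" where
  "AA m = insert (leaf 0 (ee m)) {leaf k m | k. k > ee m}"

definition mof :: "(nat \<times> real) option \<Rightarrow> nat" where
  "mof p = (case p of Some (n, r) \<Rightarrow> nat \<lfloor>1 / r\<rfloor> - 1 | None \<Rightarrow> 0)"

lemma mof_leaf [simp]: "mof (leaf n m) = m"
  by (simp add: mof_def leaf_def)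

definition fphi :: "(nat \<times> real) option \<Rightarrow> (nat \<times> real) option set" where
  "fphi p = (if p = None then {None} else AA (mof p))"

lemma fphi_None [simp]: "fphi None = {None}" by (simp add: fphi_def)
lemma fphi_leaf [simp]: "fphi (leaf n m) = AA m" by (simp add: fphi_def)

lemma AA_FS: "AA m \<subseteq> FS" unfolding AA_def FS_def by blast

lemma FS_cases: assumes "p \<in> FS" obtains "p = None" | n m where "p = leaf n m"
  using assms unfolding FS_def by blast

lemma fan_lsc: "lsc_map seq_fan seq_fan fphi"
  unfolding lsc_map_def topspace_fan
proof (intro conjI ballI allI impI)
  fix y assume "y \<in> FS"
  then show "fphi y \<subseteq> FS"
  proof (cases rule: FS_cases)
    case 1 then show ?thesis by (simp add: FS_def)
  next
    case (2 n m) then show ?thesis using AA_FS by simp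
  qed
  show "fphi y \<noteq> {}" using \<open>y \<in> FS\<close> by (cases rule: FS_cases) (auto simp: AA_def)
next
  fix U assume U: "openin seq_fan U"
  let ?S = "{y \<in> FS. fphi y \<inter> U \<noteq> {}}"
  show "openin seq_fan ?S" unfolding openin_fan
  proof (intro conjI impI allI)
    show "?S \<subseteq> FS" by blast
    fix n assume "None \<in> ?S"
    then have "None \<in> U" by simp
    then have "\<forall>k. \<exists>M. \<forall>j\<ge>M. leaf k j \<in> U" using U unfolding openin_fan by blast
    then obtain G where G: "\<And>k j. j \<ge> G k \<Longrightarrow> leaf k j \<in> U" by metis
    let ?M = "\<Sum>i<G 0. G (Suc i)"
    have "leaf n m \<in> ?S" if m: "m \<ge> ?M" for m
    proof -
      have "AA m \<inter> U \<noteq> {}"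
      proof (cases "ee m \<ge> G 0")
        case True
        then have "leaf 0 (ee m) \<in> U" by (rule G)
        moreover have "leaf 0 (ee m) \<in> AA m" by (simp add: AA_def)
        ultimately show ?thesis by blast
      next
        case False
        then have "G (Suc (ee m)) \<le> ?M"
          by (intro member_le_sum[where f = "\<lambda>i. G (Suc i)"]) auto
        then have "leaf (Suc (ee m)) m \<in> U" using m by (intro G) simp
        moreover have "leaf (Suc (ee m)) m \<in> AA m" unfolding AA_def by blast
        ultimately show ?thesis by blast
      qed
      moreover have "leaf n m \<in> FS" unfolding FS_def by blast
      ultimately show ?thesis by simp
    qed
    then show "\<exists>M. \<forall>m\<ge>M. leaf n m \<in> ?S" by blast
  qed
qed

lemma fan_closed: assumes "p \<in> FS" shows "closedin seq_fan (fphi p)"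
  using assms
proof (cases rule: FS_cases)
  case 1
  have "openin seq_fan (FS - {None})" unfolding openin_fan by blast
  then show ?thesis unfolding closedin_def topspace_fan 1 by (simp add: FS_def)
next
  case (2 n0 m0)
  have "openin seq_fan (FS - AA m0)" unfolding openin_fan
  proof (intro conjI impI allI)
    show "FS - AA m0 \<subseteq> FS" by blast
    fix n
    have "leaf n j \<in> FS - AA m0" if "j \<ge> Suc (ee m0 + m0)" for j
      using that unfolding AA_def FS_def by auto
    then show "\<exists>M. \<forall>m\<ge>M. leaf n m \<in> FS - AA m0" by blast
  qed
  then show ?thesis unfolding closedin_def topspace_fan 2 using AA_FS by simp
qed

lemma fan_not_ss: "\<not> self_selective seq_fan"
proof
  assume "self_selective seq_fan"
  then obtain f where f: "continuous_map seq_fan seq_fan f" and sel: "\<And>x. x \<in> FS \<Longrightarrow> f x \<in> fphi x"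
    unfolding self_selective_def using fan_lsc fan_closed topspace_fan by metis
  have lFS: "leaf n m \<in> FS" for n m unfolding FS_def by blast
  have fN: "f None = None" using sel[of None] by (simp add: FS_def)
  have conv: "\<exists>M. \<forall>m\<ge>M. f (leaf 0 m) \<in> V" if V: "openin seq_fan V" "None \<in> V" for V
  proof -
    have "openin seq_fan {x \<in> topspace seq_fan. f x \<in> V}"
      using f V(1) by (simp add: continuous_map_def)
    moreover have "None \<in> {x \<in> topspace seq_fan. f x \<in> V}" using fN V(2) topspace_fan by (simp add: FS_def)
    ultimately have "\<exists>M. \<forall>m\<ge>M. leaf 0 m \<in> {x \<in> topspace seq_fan. f x \<in> V}"
      unfolding openin_fan by blast
    then show ?thesis by blast
  qed
  have sA: "f (leaf 0 m) \<in> AA m" for m using sel[OF lFS, of 0 m] by simp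
  define VV where "VV g = insert None {leaf k j | k j. j > g k}" for g :: "nat \<Rightarrow> nat"
  have VVo: "openin seq_fan (VV g)" for g unfolding openin_fan
  proof (intro conjI impI allI)
    show "VV g \<subseteq> FS" unfolding VV_def FS_def by blast
    fix n
    have "leaf n j \<in> VV g" if "j \<ge> Suc (g n)" for j using that unfolding VV_def by auto
    then show "\<exists>M. \<forall>m\<ge>M. leaf n m \<in> VV g" by blast
  qed
  have VVN: "None \<in> VV g" for g unfolding VV_def by simp
  have VVl: "leaf k j \<in> VV g \<longleftrightarrow> j > g k" for g k j unfolding VV_def by auto
  have "\<exists>B. \<forall>m\<ge>B. f (leaf 0 m) \<noteq> leaf 0 N" for N
  proof -
    obtain M where "\<forall>m\<ge>M. f (leaf 0 m) \<in> VV (\<lambda>_. N)" using conv[OF VVo VVN] by blast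
    moreover have "leaf 0 N \<notin> VV (\<lambda>_. N)" using VVl[where g="\<lambda>_. N" and k=0 and j=N] by simp
    ultimately have "\<forall>m\<ge>M. f (leaf 0 m) \<noteq> leaf 0 N" by metis
    then show ?thesis by blast
  qed
  then obtain Bf where Bf: "\<And>N m. m \<ge> Bf N \<Longrightarrow> f (leaf 0 m) \<noteq> leaf 0 N" by metis
  define t where "t N = prod_encode (N, Bf N + N)" for N
  have et: "ee (t N) = N" for N by (simp add: t_def ee_def)
  have tge: "t N \<ge> Bf N + N" for N unfolding t_def by (rule le_prod_encode_2)
  have "\<exists>k. k > N \<and> f (leaf 0 (t N)) = leaf k (t N)" for N
  proof -
    have "f (leaf 0 (t N)) \<noteq> leaf 0 N" using Bf tge by (meson le_add1 le_trans)
    then show ?thesis using sA[of "t N"] et[of N] unfolding AA_def by auto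
  qed
  then obtain kk where kk: "\<And>N. kk N > N" "\<And>N. f (leaf 0 (t N)) = leaf (kk N) (t N)" by metis
  define g where "g k = (\<Sum>N<k. t N)" for k
  obtain M where M: "\<forall>m\<ge>M. f (leaf 0 m) \<in> VV g" using conv[OF VVo VVN] by blast
  have "t M \<ge> M" using tge[of M] by simp
  then have "f (leaf 0 (t M)) \<in> VV g" using M by blast
  then have "t M > g (kk M)" using kk(2)[of M] VVl by simp
  moreover have "t M \<le> g (kk M)" unfolding g_def using kk(1)[of M]
    by (intro member_le_sum[where f = t]) auto
  ultimately show False by simp
qed


theorem mainTheorem18:
  shows "\<not> self_selective seq_fan \<and> \<not> self_selective arens_space"
  using fan_not_ss arens_not_ss by blast

end
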